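(* Let $(\mathcal{C},\mathbb{E},\mathfrak{s})$ be an extriangulated category with enough injective objects. If $\mathcal{I}$ is a special precovering ideal of $\mathcal{C}$, then $\mathcal{I}^{\perp_{\mathbb{E}}}$ is a special preenveloping ideal.
   Context: An extriangulated category $(\mathcal{C},\mathbb{E},\mathfrak{s})$ (Nakaoka–Palu): additive $\mathcal{C}$, biadditive $\mathbb{E}:\mathcal{C}^{\mathrm{op}}\times\mathcal{C}\to\mathrm{Ab}$, additive realization $\mathfrak{s}$ assigning to each $\delta\in\mathbb{E}(C,A)$ an equivalence class of sequences $A\to B\to C$, forming $\mathbb{E}$-triangles $A\to B\to C\overset{\delta}{\dashrightarrow}$, satisfying (ET1)–(ET4), (ET3)$^{\mathrm{op}}$, (ET4)$^{\mathrm{op}}$. Notation $a_\star\delta=\mathbb{E}(C,a)(\delta)$, $c^\star\delta=\mathbb{E}(c,A)(\delta)$. A morphism of $\mathbb{E}$-triangles is a commuting triple $(a,b,c)$ with $a_\star\delta=c^\star\delta'$. An object $E$ is injective if for every $\mathbb{E}$-triangle $A\xrightarrow{x}B\to C\overset{\delta}{\dashrightarrow}$ every $A\to E$ factors through $x$ (equivalently $\mathbb{E}(C,E)=0$ for all $C$); $\mathcal{C}$ has enough injective objects if every $A$ admits an $\mathbb{E}$-triangle $A\to E\to C\overset{\delta}{\dashrightarrow}$ with $E$ injective. An ideal: class of morphisms with zeros, closed under sums and two-sided composition. $\mathcal{M}^{\perp_{\mathbb{E}}}=\{g:A\to Y\mid m^\star g_\star\delta=0\ \forall m\in\mathcal{M},\,m:X\to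 C,\ \forall\delta\in\mathbb{E}(C,A)\}$; ${}^{\perp_{\mathbb{E}}}\mathcal{M}=\{g:X\to C\mid g^\star m_\star\delta=0\ \forall m\in\mathcal{M},\,m:A\to Y,\ \forall\delta\in\mathbb{E}(C,A)\}$. A special $\mathcal{I}$-precover of $C$: $i:X\to C$ in $\mathcal{I}$ with $\mathbb{E}$-triangles $A\to B\to C\overset{\delta}{\dashrightarrow}$, $A'\to X\xrightarrow{i}C\overset{\delta'}{\dashrightarrow}$ and a morphism $(j,b,\mathrm{id}_C)$ between them with $j\in\mathcal{I}^{\perp_{\mathbb{E}}}$. A special $\mathcal{J}$-preenvelope of $A$: $e:A\to X$ in $\mathcal{J}$ with $\mathbb{E}$-triangles $A\xrightarrow{e}X\to Y\overset{\delta}{\dashrightarrow}$, $A\to B\to C\overset{\delta'}{\dashrightarrow}$ and a morphism $(\mathrm{id}_A,b,j)$ from the first to the second with $j\in{}^{\perp_{\mathbb{E}}}\mathcal{J}$. Special precovering (resp. preenveloping) ideal: every object has a special precover (resp. preenvelope). *)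

theory Defs
  imports "HOL-Algebra.Group"
begin

text \<open>
  Extriangulated categories (Nakaoka--Palu), encoded with explicit carriers.
  Objects have type 'o, morphisms type 'm, extension elements type 'e.
  Morphisms carry a domain and codomain; Cmp g f is the composite g o f.
  Ext C A is the abelian group E(C,A); Push C a d is a_* d = E(C,a)(d)
  and Pull c A d is c^* d = E(c,A)(d).
  Rlz C A d x y means that the sequence A -x-> B -y-> C (B = Cod x) belongs
  to the equivalence class s(d) for d in E(C,A), i.e. A -x-> B -y-> C -d-> is
  an E-triangle.
\<close>

record ('o, 'm, 'e) extri =
  Ob :: "'o set"
  Mor :: "'m set"
  Dom :: "'m \<Rightarrow> 'o"
  Cod :: "'m \<Rightarrow> 'o"
  Cmp :: "'m \<Rightarrow> 'm \<Rightarrow> 'm"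
  Idm :: "'o \<Rightarrow> 'm"
  Madd :: "'m \<Rightarrow> 'm \<Rightarrow> 'm"
  Mzero :: "'o \<Rightarrow> 'o \<Rightarrow> 'm"
  Ext :: "'o \<Rightarrow> 'o \<Rightarrow> 'e set"
  Eadd :: "'o \<Rightarrow> 'o \<Rightarrow> 'e \<Rightarrow> 'e \<Rightarrow> 'e"
  Ezero :: "'o \<Rightarrow> 'o \<Rightarrow> 'e"
  Push :: "'o \<Rightarrow> 'm \<Rightarrow> 'e \<Rightarrow> 'e"
  Pull :: "'m \<Rightarrow> 'o \<Rightarrow> 'e \<Rightarrow> 'e"
  Rlz :: "'o \<Rightarrow> 'o \<Rightarrow> 'e \<Rightarrow> 'm \<Rightarrow> 'm \<Rightarrow> bool"

definition Hom :: "('o, 'm, 'e) extri \<Rightarrow> 'o \<Rightarrow> 'o \<Rightarrow> 'm set" where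
  "Hom \<C> X Y = {f \<in> Mor \<C>. Dom \<C> f = X \<and> Cod \<C> f = Y}"

definition is_category :: "('o, 'm, 'e) extri \<Rightarrow> bool" where
  "is_category \<C> \<longleftrightarrow>
     (\<forall>f \<in> Mor \<C>. Dom \<C> f \<in> Ob \<C> \<and> Cod \<C> f \<in> Ob \<C>) \<and>
     (\<forall>X \<in> Ob \<C>. Idm \<C> X \<in> Hom \<C> X X) \<and>
     (\<forall>X Y Z f g. f \<in> Hom \<C> X Y \<longrightarrow> g \<in> Hom \<C> Y Z \<longrightarrow> Cmp \<C> g f \<in> Hom \<C> X Z) \<and>
     (\<forall>X Y f. f \<in> Hom \<C> X Y \<longrightarrow> Cmp \<C> f (Idm \<C> X) = f \<and> Cmp \<C> (Idm \<C> Y) f = f) \<and>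
     (\<forall>W X Y Z f g h. f \<in> Hom \<C> W X \<longrightarrow> g \<in> Hom \<C> X Y \<longrightarrow> h \<in> Hom \<C> Y Z \<longrightarrow>
        Cmp \<C> h (Cmp \<C> g f) = Cmp \<C> (Cmp \<C> h g) f)"

definition HomGrp :: "('o, 'm, 'e) extri \<Rightarrow> 'o \<Rightarrow> 'o \<Rightarrow> 'm monoid" where
  "HomGrp \<C> X Y = \<lparr>carrier = Hom \<C> X Y, mult = Madd \<C>, one = Mzero \<C> X Y\<rparr>"

definition is_preadditive :: "('o, 'm, 'e) extri \<Rightarrow> bool" where
  "is_preadditive \<C> \<longleftrightarrow> is_category \<C> \<and>
     (\<forall>X \<in> Ob \<C>. \<forall>Y \<in> Ob \<C>. comm_group (HomGrp \<C> X Y)) \<and>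
     (\<forall>X Y Z f f' g. f \<in> Hom \<C> X Y \<longrightarrow> f' \<in> Hom \<C> X Y \<longrightarrow> g \<in> Hom \<C> Y Z \<longrightarrow>
        Cmp \<C> g (Madd \<C> f f') = Madd \<C> (Cmp \<C> g f) (Cmp \<C> g f')) \<and>
     (\<forall>X Y Z f g g'. f \<in> Hom \<C> X Y \<longrightarrow> g \<in> Hom \<C> Y Z \<longrightarrow> g' \<in> Hom \<C> Y Z \<longrightarrow>
        Cmp \<C> (Madd \<C> g g') f = Madd \<C> (Cmp \<C> g f) (Cmp \<C> g' f))"

definition is_zero_object :: "('o, 'm, 'e) extri \<Rightarrow> 'o \<Rightarrow> bool" where
  "is_zero_object \<C> Z \<longleftrightarrow> Z \<in> Ob \<C> \<and>
     (\<forall>X \<in> Ob \<C>. (\<exists>!f. f \<in> Hom \<C> Z X) \<and> (\<exists>!f. f \<in> Hom \<C> X Z))"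

definition is_biprod :: "('o, 'm, 'e) extri \<Rightarrow> 'o \<Rightarrow> 'o \<Rightarrow> 'o \<Rightarrow> 'm \<Rightarrow> 'm \<Rightarrow> 'm \<Rightarrow> 'm \<Rightarrow> bool" where
  "is_biprod \<C> X A1 A2 i1 i2 p1 p2 \<longleftrightarrow> X \<in> Ob \<C> \<and>
     i1 \<in> Hom \<C> A1 X \<and> i2 \<in> Hom \<C> A2 X \<and> p1 \<in> Hom \<C> X A1 \<and> p2 \<in> Hom \<C> X A2 \<and>
     Cmp \<C> p1 i1 = Idm \<C> A1 \<and> Cmp \<C> p2 i2 = Idm \<C> A2 \<and>
     Cmp \<C> p1 i2 = Mzero \<C> A2 A1 \<and> Cmp \<C> p2 i1 = Mzero \<C> A1 A2 \<and>
     Madd \<C> (Cmp \<C> i1 p1) (Cmp \<C> i2 p2) = Idm \<C> X"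

definition is_additive :: "('o, 'm, 'e) extri \<Rightarrow> bool" where
  "is_additive \<C> \<longleftrightarrow> is_preadditive \<C> \<and> (\<exists>Z. is_zero_object \<C> Z) \<and>
     (\<forall>A1 \<in> Ob \<C>. \<forall>A2 \<in> Ob \<C>. \<exists>X i1 i2 p1 p2. is_biprod \<C> X A1 A2 i1 i2 p1 p2)"

definition is_iso :: "('o, 'm, 'e) extri \<Rightarrow> 'm \<Rightarrow> bool" where
  "is_iso \<C> b \<longleftrightarrow> b \<in> Mor \<C> \<and> (\<exists>b' \<in> Hom \<C> (Cod \<C> b) (Dom \<C> b).
     Cmp \<C> b' b = Idm \<C> (Dom \<C> b) \<and> Cmp \<C> b b' = Idm \<C> (Cod \<C> b))"

definition ExtGrp :: "('o, 'm, 'e) extri \<Rightarrow> 'o \<Rightarrow> 'o \<Rightarrow> 'e monoid" where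
  "ExtGrp \<C> C A = \<lparr>carrier = Ext \<C> C A, mult = Eadd \<C> C A, one = Ezero \<C> C A\<rparr>"

definition is_biadditive_E :: "('o, 'm, 'e) extri \<Rightarrow> bool" where
  "is_biadditive_E \<C> \<longleftrightarrow>
     (\<forall>C \<in> Ob \<C>. \<forall>A \<in> Ob \<C>. comm_group (ExtGrp \<C> C A)) \<and>
     \<comment> \<open>covariant part a_*\<close>
     (\<forall>C A A' a d. C \<in> Ob \<C> \<longrightarrow> a \<in> Hom \<C> A A' \<longrightarrow> d \<in> Ext \<C> C A \<longrightarrow>
        Push \<C> C a d \<in> Ext \<C> C A') \<and>
     (\<forall>C A A' a d d'. C \<in> Ob \<C> \<longrightarrow> a \<in> Hom \<C> A A' \<longrightarrow> d \<in> Ext \<C> C A \<longrightarrow> d' \<in> Ext \<C> C A \<longrightarrow>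
        Push \<C> C a (Eadd \<C> C A d d') = Eadd \<C> C A' (Push \<C> C a d) (Push \<C> C a d')) \<and>
     (\<forall>C A d. C \<in> Ob \<C> \<longrightarrow> A \<in> Ob \<C> \<longrightarrow> d \<in> Ext \<C> C A \<longrightarrow> Push \<C> C (Idm \<C> A) d = d) \<and>
     (\<forall>C A A' A'' a a' d. C \<in> Ob \<C> \<longrightarrow> a \<in> Hom \<C> A A' \<longrightarrow> a' \<in> Hom \<C> A' A'' \<longrightarrow> d \<in> Ext \<C> C A \<longrightarrow>
        Push \<C> C (Cmp \<C> a' a) d = Push \<C> C a' (Push \<C> C a d)) \<and>
     (\<forall>C A A' a b d. C \<in> Ob \<C> \<longrightarrow> a \<in> Hom \<C> A A' \<longrightarrow> b \<in> Hom \<C> A A' \<longrightarrow> d \<in> Ext \<C> C A \<longrightarrow>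
        Push \<C> C (Madd \<C> a b) d = Eadd \<C> C A' (Push \<C> C a d) (Push \<C> C b d)) \<and>
     \<comment> \<open>contravariant part c^*\<close>
     (\<forall>C C' A c d. A \<in> Ob \<C> \<longrightarrow> c \<in> Hom \<C> C' C \<longrightarrow> d \<in> Ext \<C> C A \<longrightarrow>
        Pull \<C> c A d \<in> Ext \<C> C' A) \<and>
     (\<forall>C C' A c d d'. A \<in> Ob \<C> \<longrightarrow> c \<in> Hom \<C> C' C \<longrightarrow> d \<in> Ext \<C> C A \<longrightarrow> d' \<in> Ext \<C> C A \<longrightarrow>
        Pull \<C> c A (Eadd \<C> C A d d') = Eadd \<C> C' A (Pull \<C> c A d) (Pull \<C> c A d')) \<and>
     (\<forall>C A d. C \<in> Ob \<C> \<longrightarrow> A \<in> Ob \<C> \<longrightarrow> d \<in> Ext \<C> C A \<longrightarrow> Pull \<C> (Idm \<C> C) A d = d) \<and>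
     (\<forall>C C' C'' A c c' d. A \<in> Ob \<C> \<longrightarrow> c \<in> Hom \<C> C' C \<longrightarrow> c' \<in> Hom \<C> C'' C' \<longrightarrow> d \<in> Ext \<C> C A \<longrightarrow>
        Pull \<C> (Cmp \<C> c c') A d = Pull \<C> c' A (Pull \<C> c A d)) \<and>
     (\<forall>C C' A c e d. A \<in> Ob \<C> \<longrightarrow> c \<in> Hom \<C> C' C \<longrightarrow> e \<in> Hom \<C> C' C \<longrightarrow> d \<in> Ext \<C> C A \<longrightarrow>
        Pull \<C> (Madd \<C> c e) A d = Eadd \<C> C' A (Pull \<C> c A d) (Pull \<C> e A d)) \<and>
     \<comment> \<open>bifunctoriality\<close>
     (\<forall>C C' A A' c a d. c \<in> Hom \<C> C' C \<longrightarrow> a \<in> Hom \<C> A A' \<longrightarrow> d \<in> Ext \<C> C A \<longrightarrow>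
        Push \<C> C' a (Pull \<C> c A d) = Pull \<C> c A' (Push \<C> C a d))"

definition seq_equiv :: "('o, 'm, 'e) extri \<Rightarrow> 'm \<Rightarrow> 'm \<Rightarrow> 'm \<Rightarrow> 'm \<Rightarrow> bool" where
  "seq_equiv \<C> x y x' y' \<longleftrightarrow>
     x' \<in> Hom \<C> (Dom \<C> x) (Cod \<C> x') \<and> y' \<in> Hom \<C> (Cod \<C> x') (Cod \<C> y) \<and>
     (\<exists>b \<in> Hom \<C> (Cod \<C> x) (Cod \<C> x'). is_iso \<C> b \<and> Cmp \<C> b x = x' \<and> Cmp \<C> y' b = y)"

definition msum :: "('o, 'm, 'e) extri \<Rightarrow> 'm \<Rightarrow> 'm \<Rightarrow> 'm \<Rightarrow> 'm \<Rightarrow> 'm \<Rightarrow> 'm \<Rightarrow> 'm" where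
  "msum \<C> p1 p2 j1 j2 f f' = Madd \<C> (Cmp \<C> j1 (Cmp \<C> f p1)) (Cmp \<C> j2 (Cmp \<C> f' p2))"

definition esum :: "('o, 'm, 'e) extri \<Rightarrow> 'o \<Rightarrow> 'o \<Rightarrow> 'o \<Rightarrow> 'o \<Rightarrow> 'm \<Rightarrow> 'm \<Rightarrow> 'm \<Rightarrow> 'm \<Rightarrow> 'e \<Rightarrow> 'e \<Rightarrow> 'e" where
  "esum \<C> CC AA A A' q1 q2 i1 i2 d d' =
     Eadd \<C> CC AA (Push \<C> CC i1 (Pull \<C> q1 A d)) (Push \<C> CC i2 (Pull \<C> q2 A' d'))"

definition is_additive_realization :: "('o, 'm, 'e) extri \<Rightarrow> bool" where
  "is_additive_realization \<C> \<longleftrightarrow>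
     (\<forall>C A d x y. Rlz \<C> C A d x y \<longrightarrow>
        C \<in> Ob \<C> \<and> A \<in> Ob \<C> \<and> d \<in> Ext \<C> C A \<and>
        x \<in> Hom \<C> A (Cod \<C> x) \<and> y \<in> Hom \<C> (Cod \<C> x) C) \<and>
     (\<forall>C A d. C \<in> Ob \<C> \<longrightarrow> A \<in> Ob \<C> \<longrightarrow> d \<in> Ext \<C> C A \<longrightarrow> (\<exists>x y. Rlz \<C> C A d x y)) \<and>
     (\<forall>C A d x y x' y'. Rlz \<C> C A d x y \<longrightarrow> (Rlz \<C> C A d x' y' \<longleftrightarrow> seq_equiv \<C> x y x' y')) \<and>
     \<comment> \<open>realization condition\<close>
     (\<forall>C A d x y C' A' d' x' y' a c. Rlz \<C> C A d x y \<longrightarrow> Rlz \<C> C' A' d' x' y' \<longrightarrow>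
        a \<in> Hom \<C> A A' \<longrightarrow> c \<in> Hom \<C> C C' \<longrightarrow> Push \<C> C a d = Pull \<C> c A' d' \<longrightarrow>
        (\<exists>b \<in> Hom \<C> (Cod \<C> x) (Cod \<C> x'). Cmp \<C> b x = Cmp \<C> x' a \<and> Cmp \<C> y' b = Cmp \<C> c y)) \<and>
     \<comment> \<open>s(0) is the split sequence\<close>
     (\<forall>X A C i1 i2 p1 p2. is_biprod \<C> X A C i1 i2 p1 p2 \<longrightarrow> Rlz \<C> C A (Ezero \<C> C A) i1 p2) \<and>
     \<comment> \<open>s(d \<oplus> d') = s(d) \<oplus> s(d')\<close>
     (\<forall>C A d x y C' A' d' x' y' AA i1 i2 p1 p2 BB j1 j2 r1 r2 CC k1 k2 q1 q2.
        Rlz \<C> C A d x y \<longrightarrow> Rlz \<C> C' A' d' x' y' \<longrightarrow>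
        is_biprod \<C> AA A A' i1 i2 p1 p2 \<longrightarrow>
        is_biprod \<C> BB (Cod \<C> x) (Cod \<C> x') j1 j2 r1 r2 \<longrightarrow>
        is_biprod \<C> CC C C' k1 k2 q1 q2 \<longrightarrow>
        Rlz \<C> CC AA (esum \<C> CC AA A A' q1 q2 i1 i2 d d')
          (msum \<C> p1 p2 j1 j2 x x') (msum \<C> r1 r2 k1 k2 y y'))"

definition ET3 :: "('o, 'm, 'e) extri \<Rightarrow> bool" where
  "ET3 \<C> \<longleftrightarrow>
     (\<forall>C A d x y C' A' d' x' y' a b. Rlz \<C> C A d x y \<longrightarrow> Rlz \<C> C' A' d' x' y' \<longrightarrow>
        a \<in> Hom \<C> A A' \<longrightarrow> b \<in> Hom \<C> (Cod \<C> x) (Cod \<C> x') \<longrightarrow> Cmp \<C> b x = Cmp \<C> x' a \<longrightarrow>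
        (\<exists>c \<in> Hom \<C> C C'. Cmp \<C> c y = Cmp \<C> y' b \<and> Push \<C> C a d = Pull \<C> c A' d'))"

definition ET3op :: "('o, 'm, 'e) extri \<Rightarrow> bool" where
  "ET3op \<C> \<longleftrightarrow>
     (\<forall>C A d x y C' A' d' x' y' b c. Rlz \<C> C A d x y \<longrightarrow> Rlz \<C> C' A' d' x' y' \<longrightarrow>
        b \<in> Hom \<C> (Cod \<C> x) (Cod \<C> x') \<longrightarrow> c \<in> Hom \<C> C C' \<longrightarrow> Cmp \<C> c y = Cmp \<C> y' b \<longrightarrow>
        (\<exists>a \<in> Hom \<C> A A'. Cmp \<C> b x = Cmp \<C> x' a \<and> Push \<C> C a d = Pull \<C> c A' d'))"

definition ET4 :: "('o, 'm, 'e) extri \<Rightarrow> bool" where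
  "ET4 \<C> \<longleftrightarrow>
     (\<forall>A D F d f f' d' g g'. Rlz \<C> D A d f f' \<longrightarrow> Rlz \<C> F (Cod \<C> f) d' g g' \<longrightarrow>
        (\<exists>E dd e h h' d''. E \<in> Ob \<C> \<and>
           dd \<in> Hom \<C> D E \<and> e \<in> Hom \<C> E F \<and>
           Rlz \<C> E A d'' h h' \<and> Cod \<C> h = Cod \<C> g \<and>
           h = Cmp \<C> g f \<and> Cmp \<C> dd f' = Cmp \<C> h' g \<and> Cmp \<C> e h' = g' \<and>
           Rlz \<C> F D (Push \<C> F f' d') dd e \<and>
           Pull \<C> dd A d'' = d \<and>
           Push \<C> E f d'' = Pull \<C> e (Cod \<C> f) d'))"

definition ET4op :: "('o, 'm, 'e) extri \<Rightarrow> bool" where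
  "ET4op \<C> \<longleftrightarrow>
     (\<forall>A D F d f f' d' g g'. Rlz \<C> A D d f' f \<longrightarrow> Rlz \<C> (Cod \<C> f') F d' g' g \<longrightarrow>
        (\<exists>E dd e h h' d''. E \<in> Ob \<C> \<and>
           dd \<in> Hom \<C> E D \<and> e \<in> Hom \<C> F E \<and>
           Rlz \<C> A E d'' h' h \<and> Dom \<C> h = Dom \<C> g \<and>
           h = Cmp \<C> f g \<and> Cmp \<C> f' dd = Cmp \<C> g h' \<and> Cmp \<C> h' e = g' \<and>
           Rlz \<C> D F (Pull \<C> f' F d') e dd \<and>
           Push \<C> A dd d'' = d \<and>
           Pull \<C> f E d'' = Push \<C> (Cod \<C> f') e d'))"

definition extriangulated :: "('o, 'm, 'e) extri \<Rightarrow> bool" where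
  "extriangulated \<C> \<longleftrightarrow> is_additive \<C> \<and> is_biadditive_E \<C> \<and> is_additive_realization \<C> \<and>
     ET3 \<C> \<and> ET3op \<C> \<and> ET4 \<C> \<and> ET4op \<C>"

definition injective_obj :: "('o, 'm, 'e) extri \<Rightarrow> 'o \<Rightarrow> bool" where
  "injective_obj \<C> I \<longleftrightarrow> I \<in> Ob \<C> \<and>
     (\<forall>C A d x y f. Rlz \<C> C A d x y \<longrightarrow> f \<in> Hom \<C> A I \<longrightarrow>
        (\<exists>g \<in> Hom \<C> (Cod \<C> x) I. Cmp \<C> g x = f))"

definition enough_injectives :: "('o, 'm, 'e) extri \<Rightarrow> bool" where
  "enough_injectives \<C> \<longleftrightarrow>
     (\<forall>A \<in> Ob \<C>. \<exists>C d x y. Rlz \<C> C A d x y \<and> injective_obj \<C> (Cod \<C> x))"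

definition is_ideal :: "('o, 'm, 'e) extri \<Rightarrow> ('o \<Rightarrow> 'o \<Rightarrow> 'm set) \<Rightarrow> bool" where
  "is_ideal \<C> I \<longleftrightarrow>
     (\<forall>X Y. I X Y \<subseteq> Hom \<C> X Y) \<and>
     (\<forall>X \<in> Ob \<C>. \<forall>Y \<in> Ob \<C>. Mzero \<C> X Y \<in> I X Y) \<and>
     (\<forall>X Y f g. f \<in> I X Y \<longrightarrow> g \<in> I X Y \<longrightarrow> Madd \<C> f g \<in> I X Y) \<and>
     (\<forall>W X Y Z f i g. f \<in> Hom \<C> W X \<longrightarrow> i \<in> I X Y \<longrightarrow> g \<in> Hom \<C> Y Z \<longrightarrow>
        Cmp \<C> g (Cmp \<C> i f) \<in> I W Z)"

definition perpE :: "('o, 'm, 'e) extri \<Rightarrow> ('o \<Rightarrow> 'o \<Rightarrow> 'm set) \<Rightarrow> 'o \<Rightarrow> 'o \<Rightarrow> 'm set" where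
  "perpE \<C> M A Y = {g \<in> Hom \<C> A Y. \<forall>X C m d. m \<in> M X C \<longrightarrow> d \<in> Ext \<C> C A \<longrightarrow>
      Pull \<C> m Y (Push \<C> C g d) = Ezero \<C> X Y}"

definition Eperp :: "('o, 'm, 'e) extri \<Rightarrow> ('o \<Rightarrow> 'o \<Rightarrow> 'm set) \<Rightarrow> 'o \<Rightarrow> 'o \<Rightarrow> 'm set" where
  "Eperp \<C> M X C = {g \<in> Hom \<C> X C. \<forall>A Y m d. m \<in> M A Y \<longrightarrow> d \<in> Ext \<C> C A \<longrightarrow>
      Pull \<C> g Y (Push \<C> C m d) = Ezero \<C> X Y}"

definition special_precover :: "('o, 'm, 'e) extri \<Rightarrow> ('o \<Rightarrow> 'o \<Rightarrow> 'm set) \<Rightarrow> 'o \<Rightarrow> 'm \<Rightarrow> bool" where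
  "special_precover \<C> I C i \<longleftrightarrow> i \<in> I (Dom \<C> i) C \<and>
     (\<exists>A d x y A' d' x' j b.
        Rlz \<C> C A d x y \<and> Rlz \<C> C A' d' x' i \<and>
        j \<in> Hom \<C> A A' \<and> b \<in> Hom \<C> (Cod \<C> x) (Dom \<C> i) \<and>
        Cmp \<C> b x = Cmp \<C> x' j \<and> Cmp \<C> i b = Cmp \<C> (Idm \<C> C) y \<and>
        Push \<C> C j d = Pull \<C> (Idm \<C> C) A' d' \<and>
        j \<in> perpE \<C> I A A')"

definition special_preenvelope :: "('o, 'm, 'e) extri \<Rightarrow> ('o \<Rightarrow> 'o \<Rightarrow> 'm set) \<Rightarrow> 'o \<Rightarrow> 'm \<Rightarrow> bool" where
  "special_preenvelope \<C> J A e \<longleftrightarrow> e \<in> J A (Cod \<C> e) \<and>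
     (\<exists>Y d y C d' x' y' b j.
        Rlz \<C> Y A d e y \<and> Rlz \<C> C A d' x' y' \<and>
        b \<in> Hom \<C> (Cod \<C> e) (Cod \<C> x') \<and> j \<in> Hom \<C> Y C \<and>
        Cmp \<C> b e = Cmp \<C> x' (Idm \<C> A) \<and> Cmp \<C> j y = Cmp \<C> y' b \<and>
        Push \<C> Y (Idm \<C> A) d = Pull \<C> j A d' \<and>
        j \<in> Eperp \<C> J Y C)"

definition special_precovering_ideal :: "('o, 'm, 'e) extri \<Rightarrow> ('o \<Rightarrow> 'o \<Rightarrow> 'm set) \<Rightarrow> bool" where
  "special_precovering_ideal \<C> I \<longleftrightarrow> is_ideal \<C> I \<and>
     (\<forall>C \<in> Ob \<C>. \<exists>i. special_precover \<C> I C i)"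

definition special_preenveloping_ideal :: "('o, 'm, 'e) extri \<Rightarrow> ('o \<Rightarrow> 'o \<Rightarrow> 'm set) \<Rightarrow> bool" where
  "special_preenveloping_ideal \<C> J \<longleftrightarrow> is_ideal \<C> J \<and>
     (\<forall>A \<in> Ob \<C>. \<exists>e. special_preenvelope \<C> J A e)"

end

theory Submission
  imports Defs
begin

lemma grp_idem: "group G \<Longrightarrow> x \<in> carrier G \<Longrightarrow> x \<otimes>\<^bsub>G\<^esub> x = x \<Longrightarrow> x = \<one>\<^bsub>G\<^esub>"
  by (metis group.l_cancel_one)

context
  fixes \<C> :: "('o, 'm, 'e) extri"
  assumes ex: "extriangulated \<C>"
begin

lemma catC: "is_category \<C>"
  using ex unfolding extriangulated_def is_additive_def is_preadditive_def by blast

lemma preadd: "is_preadditive \<C>"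
  using ex unfolding extriangulated_def is_additive_def by blast

lemma biadd: "is_biadditive_E \<C>"
  using ex unfolding extriangulated_def by blast

lemma realz: "is_additive_realization \<C>"
  using ex unfolding extriangulated_def by blast

lemma et3: "ET3 \<C>"
  using ex unfolding extriangulated_def by blast

lemma hom_ob: "f \<in> Hom \<C> X Y \<Longrightarrow> X \<in> Ob \<C> \<and> Y \<in> Ob \<C>"
  using catC unfolding is_category_def Hom_def by blast

lemma hom_mor: "f \<in> Hom \<C> X Y \<Longrightarrow> f \<in> Mor \<C>"
  unfolding Hom_def by blast

lemma cmp_hom: "f \<in> Hom \<C> X Y \<Longrightarrow> g \<in> Hom \<C> Y Z \<Longrightarrow> Cmp \<C> g f \<in> Hom \<C> X Z"
  using catC unfolding is_category_def by blast

lemma id_hom: "X \<in> Ob \<C> \<Longrightarrow> Idm \<C> X \<in> Hom \<C> X X"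
  using catC unfolding is_category_def by blast

lemma id_r: "f \<in> Hom \<C> X Y \<Longrightarrow> Cmp \<C> f (Idm \<C> X) = f"
  using catC unfolding is_category_def by blast

lemma id_l: "f \<in> Hom \<C> X Y \<Longrightarrow> Cmp \<C> (Idm \<C> Y) f = f"
  using catC unfolding is_category_def by blast

lemma assoc: "f \<in> Hom \<C> W X \<Longrightarrow> g \<in> Hom \<C> X Y \<Longrightarrow> h \<in> Hom \<C> Y Z \<Longrightarrow>
        Cmp \<C> h (Cmp \<C> g f) = Cmp \<C> (Cmp \<C> h g) f"
  using catC unfolding is_category_def by blast

lemma homgrp: "X \<in> Ob \<C> \<Longrightarrow> Y \<in> Ob \<C> \<Longrightarrow> comm_group (HomGrp \<C> X Y)"
  using preadd unfolding is_preadditive_def by blast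

lemma mzero_hom: "X \<in> Ob \<C> \<Longrightarrow> Y \<in> Ob \<C> \<Longrightarrow> Mzero \<C> X Y \<in> Hom \<C> X Y"
  using homgrp[of X Y] unfolding HomGrp_def
  by (metis comm_group_def group.is_monoid monoid.simps(2) monoid.one_closed partial_object.select_convs(1))

lemma mzero_idem: "X \<in> Ob \<C> \<Longrightarrow> Y \<in> Ob \<C> \<Longrightarrow> Madd \<C> (Mzero \<C> X Y) (Mzero \<C> X Y) = Mzero \<C> X Y"
  using homgrp[of X Y] unfolding HomGrp_def
  by (metis comm_group_def group.is_monoid monoid.select_convs(1,2) monoid.one_closed monoid.r_one partial_object.select_convs(1))

lemma extgrp: "C \<in> Ob \<C> \<Longrightarrow> A \<in> Ob \<C> \<Longrightarrow> group (ExtGrp \<C> C A)"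
proof -
  assume "C \<in> Ob \<C>" "A \<in> Ob \<C>"
  then have "comm_group (ExtGrp \<C> C A)" using biadd unfolding is_biadditive_E_def by (elim conjE) (metis (no_types, lifting))
  then show ?thesis by (simp add: comm_group_def)
qed

lemma ezero_ext: "C \<in> Ob \<C> \<Longrightarrow> A \<in> Ob \<C> \<Longrightarrow> Ezero \<C> C A \<in> Ext \<C> C A"
  using extgrp[of C A] unfolding ExtGrp_def
  by (metis group.is_monoid monoid.select_convs(2) monoid.one_closed partial_object.select_convs(1))

lemma ezero_idem: "C \<in> Ob \<C> \<Longrightarrow> A \<in> Ob \<C> \<Longrightarrow> Eadd \<C> C A (Ezero \<C> C A) (Ezero \<C> C A) = Ezero \<C> C A"
  using extgrp[of C A] unfolding ExtGrp_def
  by (metis group.is_monoid monoid.select_convs(1,2) monoid.one_closed monoid.r_one partial_object.select_convs(1))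

lemma ext_idem: "C \<in> Ob \<C> \<Longrightarrow> A \<in> Ob \<C> \<Longrightarrow> x \<in> Ext \<C> C A \<Longrightarrow> Eadd \<C> C A x x = x \<Longrightarrow> x = Ezero \<C> C A"
  using grp_idem[OF extgrp[of C A], of x] unfolding ExtGrp_def by simp

lemma ext_add_zero: "C \<in> Ob \<C> \<Longrightarrow> A \<in> Ob \<C> \<Longrightarrow> Eadd \<C> C A (Ezero \<C> C A) (Ezero \<C> C A) = Ezero \<C> C A"
  by (rule ezero_idem)

lemma push_ext: "C \<in> Ob \<C> \<Longrightarrow> a \<in> Hom \<C> A A' \<Longrightarrow> d \<in> Ext \<C> C A \<Longrightarrow> Push \<C> C a d \<in> Ext \<C> C A'"
  using biadd unfolding is_biadditive_E_def by (elim conjE) (metis (no_types, lifting))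

lemma push_add: "C \<in> Ob \<C> \<Longrightarrow> a \<in> Hom \<C> A A' \<Longrightarrow> d \<in> Ext \<C> C A \<Longrightarrow> d' \<in> Ext \<C> C A \<Longrightarrow>
        Push \<C> C a (Eadd \<C> C A d d') = Eadd \<C> C A' (Push \<C> C a d) (Push \<C> C a d')"
  using biadd unfolding is_biadditive_E_def by (elim conjE) (metis (no_types, lifting))

lemma push_id: "C \<in> Ob \<C> \<Longrightarrow> A \<in> Ob \<C> \<Longrightarrow> d \<in> Ext \<C> C A \<Longrightarrow> Push \<C> C (Idm \<C> A) d = d"
  using biadd unfolding is_biadditive_E_def by (elim conjE) (metis (no_types, lifting))

lemma push_cmp: "C \<in> Ob \<C> \<Longrightarrow> a \<in> Hom \<C> A A' \<Longrightarrow> a' \<in> Hom \<C> A' A'' \<Longrightarrow> d \<in> Ext \<C> C A \<Longrightarrow>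
        Push \<C> C (Cmp \<C> a' a) d = Push \<C> C a' (Push \<C> C a d)"
  using biadd unfolding is_biadditive_E_def by (elim conjE) (metis (no_types, lifting))

lemma push_madd: "C \<in> Ob \<C> \<Longrightarrow> a \<in> Hom \<C> A A' \<Longrightarrow> b \<in> Hom \<C> A A' \<Longrightarrow> d \<in> Ext \<C> C A \<Longrightarrow>
        Push \<C> C (Madd \<C> a b) d = Eadd \<C> C A' (Push \<C> C a d) (Push \<C> C b d)"
  using biadd unfolding is_biadditive_E_def by (elim conjE) (metis (no_types, lifting))

lemma pull_ext: "A \<in> Ob \<C> \<Longrightarrow> c \<in> Hom \<C> C' C \<Longrightarrow> d \<in> Ext \<C> C A \<Longrightarrow> Pull \<C> c A d \<in> Ext \<C> C' A"
  using biadd unfolding is_biadditive_E_def by (elim conjE) (metis (no_types, lifting))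

lemma pull_add: "A \<in> Ob \<C> \<Longrightarrow> c \<in> Hom \<C> C' C \<Longrightarrow> d \<in> Ext \<C> C A \<Longrightarrow> d' \<in> Ext \<C> C A \<Longrightarrow>
        Pull \<C> c A (Eadd \<C> C A d d') = Eadd \<C> C' A (Pull \<C> c A d) (Pull \<C> c A d')"
  using biadd unfolding is_biadditive_E_def by (elim conjE) (metis (no_types, lifting))

lemma pull_id: "C \<in> Ob \<C> \<Longrightarrow> A \<in> Ob \<C> \<Longrightarrow> d \<in> Ext \<C> C A \<Longrightarrow> Pull \<C> (Idm \<C> C) A d = d"
  using biadd unfolding is_biadditive_E_def by (elim conjE) (metis (no_types, lifting))

lemma pull_cmp: "A \<in> Ob \<C> \<Longrightarrow> c \<in> Hom \<C> C' C \<Longrightarrow> c' \<in> Hom \<C> C'' C' \<Longrightarrow> d \<in> Ext \<C> C A \<Longrightarrow>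
        Pull \<C> (Cmp \<C> c c') A d = Pull \<C> c' A (Pull \<C> c A d)"
  using biadd unfolding is_biadditive_E_def by (elim conjE) (metis (no_types, lifting))

lemma push_pull: "c \<in> Hom \<C> C' C \<Longrightarrow> a \<in> Hom \<C> A A' \<Longrightarrow> d \<in> Ext \<C> C A \<Longrightarrow>
        Push \<C> C' a (Pull \<C> c A d) = Pull \<C> c A' (Push \<C> C a d)"
  using biadd unfolding is_biadditive_E_def by (elim conjE) (metis (no_types, lifting))

lemma pull_zero: "A \<in> Ob \<C> \<Longrightarrow> c \<in> Hom \<C> C' C \<Longrightarrow> Pull \<C> c A (Ezero \<C> C A) = Ezero \<C> C' A"
proof -
  assume A: "A \<in> Ob \<C>" and c: "c \<in> Hom \<C> C' C"
  have C: "C \<in> Ob \<C>" "C' \<in> Ob \<C>" using hom_ob[OF c] by auto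
  have z: "Ezero \<C> C A \<in> Ext \<C> C A" using ezero_ext C A by blast
  have "Pull \<C> c A (Ezero \<C> C A) = Pull \<C> c A (Eadd \<C> C A (Ezero \<C> C A) (Ezero \<C> C A))"
    using ezero_idem C A by simp
  also have "\<dots> = Eadd \<C> C' A (Pull \<C> c A (Ezero \<C> C A)) (Pull \<C> c A (Ezero \<C> C A))"
    using pull_add[OF A c z z] .
  finally show ?thesis using ext_idem[OF C(2) A pull_ext[OF A c z]] by simp
qed

lemma push_zero: "C \<in> Ob \<C> \<Longrightarrow> a \<in> Hom \<C> A A' \<Longrightarrow> Push \<C> C a (Ezero \<C> C A) = Ezero \<C> C A'"
proof -
  assume C: "C \<in> Ob \<C>" and a: "a \<in> Hom \<C> A A'"
  have A: "A \<in> Ob \<C>" "A' \<in> Ob \<C>" using hom_ob[OF a] by auto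
  have z: "Ezero \<C> C A \<in> Ext \<C> C A" using ezero_ext C A by blast
  have "Push \<C> C a (Ezero \<C> C A) = Push \<C> C a (Eadd \<C> C A (Ezero \<C> C A) (Ezero \<C> C A))"
    using ezero_idem C A by simp
  also have "\<dots> = Eadd \<C> C A' (Push \<C> C a (Ezero \<C> C A)) (Push \<C> C a (Ezero \<C> C A))"
    using push_add[OF C a z z] .
  finally show ?thesis using ext_idem[OF C A(2) push_ext[OF C a z]] by simp
qed

lemma push_mzero: "C \<in> Ob \<C> \<Longrightarrow> A \<in> Ob \<C> \<Longrightarrow> A' \<in> Ob \<C> \<Longrightarrow> d \<in> Ext \<C> C A \<Longrightarrow>
   Push \<C> C (Mzero \<C> A A') d = Ezero \<C> C A'"
proof -
  assume C: "C \<in> Ob \<C>" and A: "A \<in> Ob \<C>" "A' \<in> Ob \<C>" and d: "d \<in> Ext \<C> C A"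
  have z: "Mzero \<C> A A' \<in> Hom \<C> A A'" using mzero_hom A by blast
  have "Push \<C> C (Mzero \<C> A A') d = Push \<C> C (Madd \<C> (Mzero \<C> A A') (Mzero \<C> A A')) d"
    using mzero_idem A by simp
  also have "\<dots> = Eadd \<C> C A' (Push \<C> C (Mzero \<C> A A') d) (Push \<C> C (Mzero \<C> A A') d)"
    using push_madd[OF C z z d] .
  finally show ?thesis using ext_idem[OF C A(2) push_ext[OF C z d]] by simp
qed


lemma rlz_props: "Rlz \<C> C A d x y \<Longrightarrow> C \<in> Ob \<C> \<and> A \<in> Ob \<C> \<and> d \<in> Ext \<C> C A \<and>
        x \<in> Hom \<C> A (Cod \<C> x) \<and> y \<in> Hom \<C> (Cod \<C> x) C"
  using realz unfolding is_additive_realization_def by (elim conjE) (metis (no_types, lifting))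

lemma rlz_ex: "C \<in> Ob \<C> \<Longrightarrow> A \<in> Ob \<C> \<Longrightarrow> d \<in> Ext \<C> C A \<Longrightarrow> \<exists>x y. Rlz \<C> C A d x y"
  using realz unfolding is_additive_realization_def by (elim conjE) (metis (no_types, lifting))

lemma rlz_cond: "Rlz \<C> C A d x y \<Longrightarrow> Rlz \<C> C' A' d' x' y' \<Longrightarrow>
        a \<in> Hom \<C> A A' \<Longrightarrow> c \<in> Hom \<C> C C' \<Longrightarrow> Push \<C> C a d = Pull \<C> c A' d' \<Longrightarrow>
        (\<exists>b \<in> Hom \<C> (Cod \<C> x) (Cod \<C> x'). Cmp \<C> b x = Cmp \<C> x' a \<and> Cmp \<C> y' b = Cmp \<C> c y)"
  using realz unfolding is_additive_realization_def by (elim conjE) (metis (no_types, lifting))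

lemma rlz_split: "is_biprod \<C> X A C i1 i2 p1 p2 \<Longrightarrow> Rlz \<C> C A (Ezero \<C> C A) i1 p2"
  using realz unfolding is_additive_realization_def by (elim conjE) (metis (no_types, lifting))

lemma biprod_ex: "A1 \<in> Ob \<C> \<Longrightarrow> A2 \<in> Ob \<C> \<Longrightarrow> \<exists>X i1 i2 p1 p2. is_biprod \<C> X A1 A2 i1 i2 p1 p2"
  using ex unfolding extriangulated_def is_additive_def by blast

lemma et3_rule: "Rlz \<C> C A d x y \<Longrightarrow> Rlz \<C> C' A' d' x' y' \<Longrightarrow>
        a \<in> Hom \<C> A A' \<Longrightarrow> b \<in> Hom \<C> (Cod \<C> x) (Cod \<C> x') \<Longrightarrow> Cmp \<C> b x = Cmp \<C> x' a \<Longrightarrow>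
        (\<exists>c \<in> Hom \<C> C C'. Cmp \<C> c y = Cmp \<C> y' b \<and> Push \<C> C a d = Pull \<C> c A' d')"
  using et3 unfolding ET3_def by (metis (no_types, lifting))

lemma x_push_zero: "Rlz \<C> C A d x y \<Longrightarrow> Push \<C> C x d = Ezero \<C> C (Cod \<C> x)"
proof -
  assume r: "Rlz \<C> C A d x y"
  note p = rlz_props[OF r]
  have B: "Cod \<C> x \<in> Ob \<C>" using hom_ob p by blast
  obtain W i1 i2 p1 p2 where bp: "is_biprod \<C> W (Cod \<C> x) C i1 i2 p1 p2"
    using biprod_ex[OF B] p by blast
  have r2: "Rlz \<C> C (Cod \<C> x) (Ezero \<C> C (Cod \<C> x)) i1 p2" using rlz_split[OF bp] .
  have i1: "i1 \<in> Hom \<C> (Cod \<C> x) W" using bp unfolding is_biprod_def by blast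
  then have i1': "i1 \<in> Hom \<C> (Cod \<C> x) (Cod \<C> i1)" unfolding Hom_def by simp
  obtain c where c: "c \<in> Hom \<C> C C"
     "Push \<C> C x d = Pull \<C> c (Cod \<C> x) (Ezero \<C> C (Cod \<C> x))"
    using et3_rule[OF r r2 _ i1', of x] p by blast
  then show ?thesis using pull_zero B by simp
qed

lemma madd_hom: "f \<in> Hom \<C> X Y \<Longrightarrow> g \<in> Hom \<C> X Y \<Longrightarrow> Madd \<C> f g \<in> Hom \<C> X Y"
proof -
  assume f: "f \<in> Hom \<C> X Y" and g: "g \<in> Hom \<C> X Y"
  have "group (HomGrp \<C> X Y)" using homgrp hom_ob[OF f] comm_group_def by blast
  then show ?thesis using f g unfolding HomGrp_def
    by (metis group.is_monoid monoid.m_closed monoid.select_convs(1) partial_object.select_convs(1))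
qed

lemma perpE_ideal: "is_ideal \<C> I \<Longrightarrow> is_ideal \<C> (perpE \<C> I)"
proof -
  assume I: "is_ideal \<C> I"
  have IH: "\<And>X C m. m \<in> I X C \<Longrightarrow> m \<in> Hom \<C> X C" using I unfolding is_ideal_def by blast
  have a: "\<forall>X Y. perpE \<C> I X Y \<subseteq> Hom \<C> X Y" unfolding perpE_def by blast
  have b: "\<forall>X \<in> Ob \<C>. \<forall>Y \<in> Ob \<C>. Mzero \<C> X Y \<in> perpE \<C> I X Y"
  proof (intro ballI)
    fix X Y assume X: "X \<in> Ob \<C>" and Y: "Y \<in> Ob \<C>"
    show "Mzero \<C> X Y \<in> perpE \<C> I X Y" unfolding perpE_def
    proof (intro CollectI conjI allI impI)
      show "Mzero \<C> X Y \<in> Hom \<C> X Y" using mzero_hom X Y by blast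
      fix X' C m d assume m: "m \<in> I X' C" and d: "d \<in> Ext \<C> C X"
      have mh: "m \<in> Hom \<C> X' C" using IH m .
      have C: "C \<in> Ob \<C>" using hom_ob[OF mh] by blast
      show "Pull \<C> m Y (Push \<C> C (Mzero \<C> X Y) d) = Ezero \<C> X' Y"
        using push_mzero[OF C X Y d] pull_zero[OF Y mh] by simp
    qed
  qed
  have c: "\<forall>X Y f g. f \<in> perpE \<C> I X Y \<longrightarrow> g \<in> perpE \<C> I X Y \<longrightarrow> Madd \<C> f g \<in> perpE \<C> I X Y"
  proof (intro allI impI)
    fix X Y f g assume f: "f \<in> perpE \<C> I X Y" and g: "g \<in> perpE \<C> I X Y"
    have fh: "f \<in> Hom \<C> X Y" and gh: "g \<in> Hom \<C> X Y" using f g unfolding perpE_def by auto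
    have Y: "Y \<in> Ob \<C>" using hom_ob[OF fh] by blast
    show "Madd \<C> f g \<in> perpE \<C> I X Y" unfolding perpE_def
    proof (intro CollectI conjI allI impI)
      show "Madd \<C> f g \<in> Hom \<C> X Y" using madd_hom fh gh by blast
      fix X' C m d assume m: "m \<in> I X' C" and d: "d \<in> Ext \<C> C X"
      have mh: "m \<in> Hom \<C> X' C" using IH m .
      have C: "C \<in> Ob \<C>" "X' \<in> Ob \<C>" using hom_ob[OF mh] by auto
      have "Pull \<C> m Y (Push \<C> C (Madd \<C> f g) d) =
         Eadd \<C> X' Y (Pull \<C> m Y (Push \<C> C f d)) (Pull \<C> m Y (Push \<C> C g d))"
        using push_madd[OF C(1) fh gh d] pull_add[OF Y mh push_ext[OF C(1) fh d] push_ext[OF C(1) gh d]]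
        by simp
      also have "\<dots> = Eadd \<C> X' Y (Ezero \<C> X' Y) (Ezero \<C> X' Y)"
        using f g m d unfolding perpE_def by auto
      also have "\<dots> = Ezero \<C> X' Y" using ezero_idem C Y by blast
      finally show "Pull \<C> m Y (Push \<C> C (Madd \<C> f g) d) = Ezero \<C> X' Y" .
    qed
  qed
  have d: "\<forall>W X Y Z f i g. f \<in> Hom \<C> W X \<longrightarrow> i \<in> perpE \<C> I X Y \<longrightarrow> g \<in> Hom \<C> Y Z \<longrightarrow>
        Cmp \<C> g (Cmp \<C> i f) \<in> perpE \<C> I W Z"
  proof (intro allI impI)
    fix W X Y Z f i g assume f: "f \<in> Hom \<C> W X" and i: "i \<in> perpE \<C> I X Y" and g: "g \<in> Hom \<C> Y Z"
    have ih: "i \<in> Hom \<C> X Y" using i unfolding perpE_def by auto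
    have Y: "Y \<in> Ob \<C>" using hom_ob[OF ih] by blast
    show "Cmp \<C> g (Cmp \<C> i f) \<in> perpE \<C> I W Z" unfolding perpE_def
    proof (intro CollectI conjI allI impI)
      show "Cmp \<C> g (Cmp \<C> i f) \<in> Hom \<C> W Z" using cmp_hom f ih g by blast
      fix X' C m d assume m: "m \<in> I X' C" and d: "d \<in> Ext \<C> C W"
      have mh: "m \<in> Hom \<C> X' C" using IH m .
      have C: "C \<in> Ob \<C>" "X' \<in> Ob \<C>" using hom_ob[OF mh] by auto
      have fd: "Push \<C> C f d \<in> Ext \<C> C X" using push_ext[OF C(1) f d] .
      have ifd: "Push \<C> C i (Push \<C> C f d) \<in> Ext \<C> C Y" using push_ext[OF C(1) ih fd] .
      have "Push \<C> C (Cmp \<C> g (Cmp \<C> i f)) d = Push \<C> C g (Push \<C> C i (Push \<C> C f d))"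
        using push_cmp[OF C(1) cmp_hom[OF f ih] g d] push_cmp[OF C(1) f ih d] by simp
      then have "Pull \<C> m Z (Push \<C> C (Cmp \<C> g (Cmp \<C> i f)) d) =
           Push \<C> X' g (Pull \<C> m Y (Push \<C> C i (Push \<C> C f d)))"
        using push_pull[OF mh g ifd] by simp
      also have "\<dots> = Push \<C> X' g (Ezero \<C> X' Y)" using i m fd unfolding perpE_def by auto
      also have "\<dots> = Ezero \<C> X' Z" using push_zero[OF C(2) g] .
      finally show "Pull \<C> m Z (Push \<C> C (Cmp \<C> g (Cmp \<C> i f)) d) = Ezero \<C> X' Z" .
    qed
  qed
  show ?thesis unfolding is_ideal_def using a b c d by blast
qed

lemma factor_through:
  assumes I: "is_ideal \<C> I"
    and r0: "Rlz \<C> C A0 d0 x0 y0" and r': "Rlz \<C> C A' d' x' i"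
    and j: "j \<in> Hom \<C> A0 A'" and jd: "Push \<C> C j d0 = Pull \<C> (Idm \<C> C) A' d'"
    and jp: "j \<in> perpE \<C> I A0 A'" and g: "g \<in> I X1 C"
  shows "\<exists>h \<in> Hom \<C> X1 (Cod \<C> x'). g = Cmp \<C> i h"
proof -
  have gh: "g \<in> Hom \<C> X1 C" using I g unfolding is_ideal_def by blast
  note p0 = rlz_props[OF r0] and p' = rlz_props[OF r']
  have X1: "X1 \<in> Ob \<C>" using hom_ob[OF gh] by blast
  have A': "A' \<in> Ob \<C>" using p' by blast
  have "Push \<C> C j d0 = d'" using jd pull_id p' by simp
  then have z: "Pull \<C> g A' d' = Ezero \<C> X1 A'" using jp g p0 unfolding perpE_def by blast
  obtain W i1 i2 p1 p2 where bp: "is_biprod \<C> W A' X1 i1 i2 p1 p2"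
    using biprod_ex[OF A' X1] by blast
  have r2: "Rlz \<C> X1 A' (Ezero \<C> X1 A') i1 p2" using rlz_split[OF bp] .
  have bpp: "i1 \<in> Hom \<C> A' W" "i2 \<in> Hom \<C> X1 W" "p2 \<in> Hom \<C> W X1" "Cmp \<C> p2 i2 = Idm \<C> X1"
    using bp unfolding is_biprod_def by auto
  have ci1: "Cod \<C> i1 = W" using bpp(1) unfolding Hom_def by simp
  have "Push \<C> X1 (Idm \<C> A') (Ezero \<C> X1 A') = Pull \<C> g A' d'"
    using push_id[OF X1 A' ezero_ext[OF X1 A']] z by simp
  then obtain bb where bb: "bb \<in> Hom \<C> (Cod \<C> i1) (Cod \<C> x')" "Cmp \<C> i bb = Cmp \<C> g p2"
    using rlz_cond[OF r2 r' id_hom[OF A'] gh] by blast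
  have bb': "bb \<in> Hom \<C> W (Cod \<C> x')" using bb(1) ci1 by simp
  have ih: "i \<in> Hom \<C> (Cod \<C> x') C" using p' by blast
  have "g = Cmp \<C> g (Cmp \<C> p2 i2)" using id_r[OF gh] bpp by simp
  also have "\<dots> = Cmp \<C> (Cmp \<C> g p2) i2" using assoc[OF bpp(2) bpp(3) gh] .
  also have "\<dots> = Cmp \<C> (Cmp \<C> i bb) i2" using bb by simp
  also have "\<dots> = Cmp \<C> i (Cmp \<C> bb i2)" using assoc[OF bpp(2) bb' ih] by simp
  finally show ?thesis using cmp_hom[OF bpp(2) bb'] by blast
qed

lemma inj_ext: "injective_obj \<C> E \<Longrightarrow> Rlz \<C> C1 A d x1 y1 \<Longrightarrow> f \<in> Hom \<C> A E \<Longrightarrow>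
   \<exists>g \<in> Hom \<C> (Cod \<C> x1) E. Cmp \<C> g x1 = f"
  unfolding injective_obj_def by blast

lemma main:
  assumes EI: "enough_injectives \<C>" and SP: "special_precovering_ideal \<C> I"
  shows "special_preenveloping_ideal \<C> (perpE \<C> I)"
proof -
  have I: "is_ideal \<C> I" using SP unfolding special_precovering_ideal_def by blast
  have IH: "\<And>X C m. m \<in> I X C \<Longrightarrow> m \<in> Hom \<C> X C" using I unfolding is_ideal_def by blast
  have env: "\<exists>e. special_preenvelope \<C> (perpE \<C> I) A e" if A: "A \<in> Ob \<C>" for A
  proof -
    obtain C \<delta> x y where rd: "Rlz \<C> C A \<delta> x y" and inj: "injective_obj \<C> (Cod \<C> x)"
      using EI A unfolding enough_injectives_def by blast
    note pd = rlz_props[OF rd]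
    have C: "C \<in> Ob \<C>" using pd by blast
    obtain i where sp: "special_precover \<C> I C i" using SP C unfolding special_precovering_ideal_def by blast
    obtain A0 d0 x0 y0 A' d' x' j b0 where
      iI: "i \<in> I (Dom \<C> i) C" and r0: "Rlz \<C> C A0 d0 x0 y0" and r': "Rlz \<C> C A' d' x' i"
      and j: "j \<in> Hom \<C> A0 A'" and jd: "Push \<C> C j d0 = Pull \<C> (Idm \<C> C) A' d'"
      and jp: "j \<in> perpE \<C> I A0 A'"
      using sp unfolding special_precover_def by blast
    define X where "X = Cod \<C> x'"
    have ih: "i \<in> Hom \<C> X C" using rlz_props[OF r'] unfolding X_def by blast
    have domi: "Dom \<C> i = X" using ih unfolding Hom_def by simp
    have iI': "i \<in> I X C" using iI domi by simp
    have X: "X \<in> Ob \<C>" using hom_ob[OF ih] by blast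
    define d where "d = Pull \<C> i A \<delta>"
    have dE: "d \<in> Ext \<C> X A" unfolding d_def using pull_ext[OF A ih] pd by blast
    obtain e p where re: "Rlz \<C> X A d e p" using rlz_ex[OF X A dE] by blast
    note pe = rlz_props[OF re]
    define M where "M = Cod \<C> e"
    have eh: "e \<in> Hom \<C> A M" using pe unfolding M_def by blast
    have pid: "Push \<C> X (Idm \<C> A) d = Pull \<C> i A \<delta>" using push_id[OF X A dE] d_def by simp
    obtain bm where bm: "bm \<in> Hom \<C> (Cod \<C> e) (Cod \<C> x)" "Cmp \<C> bm e = Cmp \<C> x (Idm \<C> A)"
       "Cmp \<C> y bm = Cmp \<C> i p"
      using rlz_cond[OF re rd id_hom[OF A] ih pid] by blast
    have iperp: "i \<in> Eperp \<C> (perpE \<C> I) X C"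
      unfolding Eperp_def using ih iI' unfolding perpE_def by blast
    have eperp: "e \<in> perpE \<C> I A M" unfolding perpE_def
    proof (intro CollectI conjI allI impI)
      show "e \<in> Hom \<C> A M" using eh .
      fix X1 C1 m d1 assume m: "m \<in> I X1 C1" and d1: "d1 \<in> Ext \<C> C1 A"
      have mh: "m \<in> Hom \<C> X1 C1" using IH m .
      have C1: "C1 \<in> Ob \<C>" "X1 \<in> Ob \<C>" using hom_ob[OF mh] by auto
      have M: "M \<in> Ob \<C>" using hom_ob[OF eh] by blast
      obtain x1 y1 where r1: "Rlz \<C> C1 A d1 x1 y1" using rlz_ex[OF C1(1) A d1] by blast
      note p1 = rlz_props[OF r1]
      obtain g0 where g0: "g0 \<in> Hom \<C> (Cod \<C> x1) (Cod \<C> x)" "Cmp \<C> g0 x1 = x"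
        using inj_ext[OF inj r1] pd by blast
      have "Cmp \<C> g0 x1 = Cmp \<C> x (Idm \<C> A)" using g0(2) id_r pd by metis
      then obtain c where c: "c \<in> Hom \<C> C1 C" "Push \<C> C1 (Idm \<C> A) d1 = Pull \<C> c A \<delta>"
        using et3_rule[OF r1 rd id_hom[OF A] g0(1)] by blast
      have d1c: "d1 = Pull \<C> c A \<delta>" using c(2) push_id[OF C1(1) A d1] by simp
      have "Cmp \<C> c (Cmp \<C> m (Idm \<C> X1)) \<in> I X1 C"
        using I id_hom[OF C1(2)] m c(1) unfolding is_ideal_def by blast
      then have gI: "Cmp \<C> c m \<in> I X1 C" using id_r[OF mh] by simp
      obtain h where h: "h \<in> Hom \<C> X1 X" "Cmp \<C> c m = Cmp \<C> i h"
        using factor_through[OF I r0 r' j jd jp gI] unfolding X_def by blast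
      have eE: "Push \<C> C e \<delta> \<in> Ext \<C> C M" using push_ext[OF C eh] pd by blast
      have "Pull \<C> m M (Push \<C> C1 e d1) = Pull \<C> m M (Pull \<C> c M (Push \<C> C e \<delta>))"
        using d1c push_pull[OF c(1) eh] pd by simp
      also have "\<dots> = Pull \<C> (Cmp \<C> c m) M (Push \<C> C e \<delta>)"
        using pull_cmp[OF M c(1) mh eE] by simp
      also have "\<dots> = Pull \<C> h M (Pull \<C> i M (Push \<C> C e \<delta>))"
        using h(2) pull_cmp[OF M ih h(1) eE] by simp
      also have "Pull \<C> i M (Push \<C> C e \<delta>) = Push \<C> X e d"
        using push_pull[OF ih eh] pd d_def by simp
      also have "\<dots> = Ezero \<C> X M" using x_push_zero[OF re] M_def by simp
      also have "Pull \<C> h M (Ezero \<C> X M) = Ezero \<C> X1 M" using pull_zero[OF M h(1)] .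
      finally show "Pull \<C> m M (Push \<C> C1 e d1) = Ezero \<C> X1 M" .
    qed
    have "special_preenvelope \<C> (perpE \<C> I) A e"
      unfolding special_preenvelope_def
      apply (rule conjI)
       apply (rule eperp[unfolded M_def])
      apply (rule exI[of _ X], rule exI[of _ d], rule exI[of _ p], rule exI[of _ C], rule exI[of _ \<delta>],
         rule exI[of _ x], rule exI[of _ y], rule exI[of _ bm], rule exI[of _ i])
      using re rd bm ih pid iperp d_def by simp
    then show ?thesis by blast
  qed
  show ?thesis unfolding special_preenveloping_ideal_def using perpE_ideal[OF I] env by blast
qed
end

theorem theorem4p4:
  fixes \<C> :: "('o, 'm, 'e) extri" and I :: "'o \<Rightarrow> 'o \<Rightarrow> 'm set"
  assumes "extriangulated \<C>"
    and "enough_injectives \<C>"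
    and "special_precovering_ideal \<C> I"
  shows "special_preenveloping_ideal \<C> (perpE \<C> I)"
  using main[OF assms] .

end
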